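(* In the setting below, assume $c^2=\gamma p/\rho>0$ and $0<|H|^2\ne\rho c^2$, and restrict to points with $\xi\cdot H\ne0$ and $\xi\times H\ne0$. Let $\Gamma_1,\Gamma_2,\Gamma_3$ be pairwise disjoint conic neighborhoods of $\{q_1=0\},\{q_2=0\},\{q_3=0\}$, and set $q=q_j$ in $\Gamma_j$. Then $P$ is of real principal type with respect to the Hamilton field $H_q$ of $\operatorname{Char}P=\{q=0\}$; that is, at every point of $\operatorname{Char}P$ there is a $3\times 3$ symbol $\tilde p_2$ with $\tilde p_2p_2=q\operatorname{Id}_3$ nearby, with $q$ a scalar symbol of real principal type.
   Context: $\rho,p:\mathbb R^3\to\mathbb R$, $H:\mathbb R^3\to\mathbb R^3$ smooth, $\rho>0$, $\gamma$ constant; $P$ is the $3\times3$ operator on $\mathbb R_t\times\mathbb R^3_x$: $P\beta=-\rho\partial_t^2\beta+\gamma\nabla(p\operatorname{div}\beta)+\nabla(\beta\cdot\nabla p)+(\nabla\times(\nabla\times(\beta\times H)))\times H+(\nabla\times H)\times(\nabla\times(\beta\times H))$, with principal symbol $p_2=(\rho\tau^2-(H\cdot\xi)^2)\operatorname{Id}_3-(\gamma p+|H|^2)\xi\otimes\xi+(H\cdot\xi)(\xi\otimes H+H\otimes\xi)$. $q_1=\rho\tau^2-(H\cdot\xi)^2$, $q_2=\rho(\tau^2-c_s^2(x,\xi))$, $q_3=\rho(\tau^2-c_f^2(x,\xi))$, where $c^2=\gamma p/\rho$, $h^2=|H|^2/\rho$, $b^2=|\xi\times H|^2/\rho$, $c_{f,s}^2(x,\xi)=\tfrac12\big((c^2+h^2)|\xi|^2\pm\sqrt{(c^2-h^2)^2|\xi|^4+4b^2c^2|\xi|^2}\big)$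 ($+$ for $f$, $-$ for $s$). A scalar symbol $q$ is of real principal type if it is real and its Hamilton field $H_q=\sum\partial_{\xi_j}q\,\partial_{x_j}-\partial_{x_j}q\,\partial_{\xi_j}$ is non-vanishing and not in the radial direction where $q=0$. *)

theory Defs
  imports "HOL-Analysis.Analysis"
begin

text \<open>Phase space T*(R_t x R^3_x): a point is (t, x, tau, xi).\<close>
type_synonym phase = "real \<times> (real^3) \<times> real \<times> (real^3)"

fun iter_dd :: "'a list \<Rightarrow> ('a::real_normed_vector \<Rightarrow> 'b::real_normed_vector) \<Rightarrow> 'a \<Rightarrow> 'b" where
  "iter_dd [] f = f"
| "iter_dd (v # vs) f = (\<lambda>x. frechet_derivative (iter_dd vs f) (at x) v)"

definition smooth_on :: "'a::real_normed_vector set \<Rightarrow> ('a \<Rightarrow> 'b::real_normed_vector) \<Rightarrow> bool" where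
  "smooth_on S f \<longleftrightarrow> open S \<and> (\<forall>vs. iter_dd vs f differentiable_on S)"

definition dil :: "real \<Rightarrow> phase \<Rightarrow> phase" where
  "dil s z = (case z of (t, x, \<tau>, \<xi>) \<Rightarrow> (t, x, s * \<tau>, s *\<^sub>R \<xi>))"

definition conic :: "phase set \<Rightarrow> bool" where
  "conic S \<longleftrightarrow> (\<forall>z\<in>S. \<forall>s>0. dil s z \<in> S)"

definition homogeneous_on :: "phase set \<Rightarrow> nat \<Rightarrow> (phase \<Rightarrow> 'b::real_normed_vector) \<Rightarrow> bool" where
  "homogeneous_on S k f \<longleftrightarrow> (\<forall>z\<in>S. \<forall>s>0. f (dil s z) = s ^ k *\<^sub>R f z)"

text \<open>Hamilton field on T*(R^4):
  H_q = dq/dtau d_t + dq/dxi . d_x - dq/dt d_tau - dq/dx . d_xi,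
  written as a vector (t-, x-, tau-, xi-components); radial field (0,0,tau,xi).\<close>
definition ham :: "(phase \<Rightarrow> real) \<Rightarrow> phase \<Rightarrow> phase" where
  "ham q z = (let D = frechet_derivative q (at z) in
     (D (0, 0, 1, 0),
      (\<chi> j. D (0, 0, 0, axis j 1)),
      - D (1, 0, 0, 0),
      - (\<chi> j. D (0, axis j 1, 0, 0))))"

definition radial :: "phase \<Rightarrow> phase" where
  "radial z = (case z of (t, x, \<tau>, \<xi>) \<Rightarrow> (0, 0, \<tau>, \<xi>))"

definition real_principal_type :: "phase set \<Rightarrow> (phase \<Rightarrow> real) \<Rightarrow> bool" where
  "real_principal_type S q \<longleftrightarrow> smooth_on S q \<and>
     (\<forall>z\<in>S. q z = 0 \<longrightarrow> ham q z \<noteq> 0 \<and> (\<forall>c::real. ham q z \<noteq> c *\<^sub>R radial z))"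

definition outer :: "real^3 \<Rightarrow> real^3 \<Rightarrow> real^3^3" where
  "outer u v = (\<chi> i j. u $ i * v $ j)"

definition p2 :: "(real^3 \<Rightarrow> real) \<Rightarrow> (real^3 \<Rightarrow> real) \<Rightarrow> (real^3 \<Rightarrow> real^3) \<Rightarrow> real \<Rightarrow> phase \<Rightarrow> real^3^3" where
  "p2 rho p H gamma z = (case z of (t, x, \<tau>, \<xi>) \<Rightarrow>
      (rho x * \<tau>^2 - (H x \<bullet> \<xi>)^2) *\<^sub>R mat 1
      - (gamma * p x + (norm (H x))^2) *\<^sub>R outer \<xi> \<xi>
      + (H x \<bullet> \<xi>) *\<^sub>R (outer \<xi> (H x) + outer (H x) \<xi>))"

definition csq :: "(real^3 \<Rightarrow> real) \<Rightarrow> (real^3 \<Rightarrow> real) \<Rightarrow> real \<Rightarrow> real^3 \<Rightarrow> real" where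
  "csq rho p gamma x = gamma * p x / rho x"

definition hsq :: "(real^3 \<Rightarrow> real) \<Rightarrow> (real^3 \<Rightarrow> real^3) \<Rightarrow> real^3 \<Rightarrow> real" where
  "hsq rho H x = (norm (H x))^2 / rho x"

definition bsq :: "(real^3 \<Rightarrow> real) \<Rightarrow> (real^3 \<Rightarrow> real^3) \<Rightarrow> real^3 \<Rightarrow> real^3 \<Rightarrow> real" where
  "bsq rho H x \<xi> = (norm (cross3 \<xi> (H x)))^2 / rho x"

definition cfsq :: "(real^3 \<Rightarrow> real) \<Rightarrow> (real^3 \<Rightarrow> real) \<Rightarrow> (real^3 \<Rightarrow> real^3) \<Rightarrow> real \<Rightarrow> real^3 \<Rightarrow> real^3 \<Rightarrow> real" where
  "cfsq rho p H gamma x \<xi> = ((csq rho p gamma x + hsq rho H x) * (norm \<xi>)^2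
     + sqrt ((csq rho p gamma x - hsq rho H x)^2 * (norm \<xi>)^4
             + 4 * bsq rho H x \<xi> * csq rho p gamma x * (norm \<xi>)^2)) / 2"

definition cssq :: "(real^3 \<Rightarrow> real) \<Rightarrow> (real^3 \<Rightarrow> real) \<Rightarrow> (real^3 \<Rightarrow> real^3) \<Rightarrow> real \<Rightarrow> real^3 \<Rightarrow> real^3 \<Rightarrow> real" where
  "cssq rho p H gamma x \<xi> = ((csq rho p gamma x + hsq rho H x) * (norm \<xi>)^2
     - sqrt ((csq rho p gamma x - hsq rho H x)^2 * (norm \<xi>)^4
             + 4 * bsq rho H x \<xi> * csq rho p gamma x * (norm \<xi>)^2)) / 2"

definition q1 :: "(real^3 \<Rightarrow> real) \<Rightarrow> (real^3 \<Rightarrow> real^3) \<Rightarrow> phase \<Rightarrow> real" where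
  "q1 rho H z = (case z of (t, x, \<tau>, \<xi>) \<Rightarrow> rho x * \<tau>^2 - (H x \<bullet> \<xi>)^2)"

definition q2 :: "(real^3 \<Rightarrow> real) \<Rightarrow> (real^3 \<Rightarrow> real) \<Rightarrow> (real^3 \<Rightarrow> real^3) \<Rightarrow> real \<Rightarrow> phase \<Rightarrow> real" where
  "q2 rho p H gamma z = (case z of (t, x, \<tau>, \<xi>) \<Rightarrow> rho x * (\<tau>^2 - cssq rho p H gamma x \<xi>))"

definition q3 :: "(real^3 \<Rightarrow> real) \<Rightarrow> (real^3 \<Rightarrow> real) \<Rightarrow> (real^3 \<Rightarrow> real^3) \<Rightarrow> real \<Rightarrow> phase \<Rightarrow> real" where
  "q3 rho p H gamma z = (case z of (t, x, \<tau>, \<xi>) \<Rightarrow> rho x * (\<tau>^2 - cfsq rho p H gamma x \<xi>))"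

definition Omega :: "(real^3 \<Rightarrow> real^3) \<Rightarrow> phase set" where
  "Omega H = {z. case z of (t, x, \<tau>, \<xi>) \<Rightarrow> \<xi> \<bullet> H x \<noteq> 0 \<and> cross3 \<xi> (H x) \<noteq> 0}"

definition reduces_at :: "(phase \<Rightarrow> real^3^3) \<Rightarrow> phase set \<Rightarrow> (phase \<Rightarrow> real) \<Rightarrow> phase \<Rightarrow> bool" where
  "reduces_at P G q z \<longleftrightarrow> (\<exists>U pt. open U \<and> conic U \<and> z \<in> U \<and> U \<subseteq> G \<and>
      smooth_on U pt \<and> homogeneous_on U 0 pt \<and>
      (\<forall>w\<in>U. pt w ** P w = q w *\<^sub>R mat 1) \<and> real_principal_type U q)"

end

theory Submission
  imports Defs
begin


lemma iter_dd_append: "iter_dd (vs @ ws) f = iter_dd vs (iter_dd ws f)"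
  by (induction vs) auto

lemma fd_cong_open:
  assumes "open S" "x \<in> S" "\<And>y. y \<in> S \<Longrightarrow> f y = g y"
  shows "frechet_derivative f (at x) = frechet_derivative g (at x)"
proof -
  have "\<And>D. (f has_derivative D) (at x) = (g has_derivative D) (at x)"
    using has_derivative_transform_within_open[OF _ assms(1,2)] assms(3) by metis
  then show ?thesis unfolding frechet_derivative_def by simp
qed

lemma differentiable_cong_open:
  assumes "open S" "\<And>y. y \<in> S \<Longrightarrow> f y = g y" "g differentiable_on S"
  shows "f differentiable_on S"
proof -
  have "f differentiable at x" if "x \<in> S" for x
  proof -
    from assms(3) that assms(1) have "g differentiable at x"
      by (simp add: differentiable_on_eq_differentiable_at)
    then obtain D where "(g has_derivative D) (at x)" unfolding differentiable_def by blast
    then have "(f has_derivative D) (at x)"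
      using has_derivative_transform_within_open[OF _ assms(1) that] assms(2) by metis
    then show ?thesis unfolding differentiable_def by blast
  qed
  then show ?thesis using assms(1) by (simp add: differentiable_on_eq_differentiable_at)
qed

lemma smooth_coind:
  assumes S: "open S"
    and D: "\<And>f. f \<in> F \<Longrightarrow> f differentiable_on S"
    and N: "\<And>f v. f \<in> F \<Longrightarrow> \<exists>g\<in>F. \<forall>x\<in>S. frechet_derivative f (at x) v = g x"
    and f: "f \<in> F"
  shows "smooth_on S f"
proof -
  have "\<exists>g\<in>F. \<forall>x\<in>S. iter_dd vs f x = g x" for vs
  proof (induction vs)
    case Nil then show ?case using f by auto
  next
    case (Cons v vs)
    then obtain g where g: "g \<in> F" "\<forall>x\<in>S. iter_dd vs f x = g x" by blast
    obtain g' where g': "g' \<in> F" "\<forall>x\<in>S. frechet_derivative g (at x) v = g' x"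
      using N[OF g(1)] by blast
    have "\<forall>x\<in>S. iter_dd (v # vs) f x = g' x"
    proof
      fix x assume x: "x \<in> S"
      have "frechet_derivative (iter_dd vs f) (at x) = frechet_derivative g (at x)"
        using fd_cong_open[OF S x, of "iter_dd vs f" g] g(2) by blast
      then show "iter_dd (v # vs) f x = g' x" using g'(2) x by simp
    qed
    then show ?case using g' by blast
  qed
  then have "iter_dd vs f differentiable_on S" for vs
    using differentiable_cong_open[OF S] D by metis
  then show ?thesis using S unfolding smooth_on_def by blast
qed

lemma smooth_diff:
  assumes "smooth_on S f" shows "f differentiable_on S"
  using assms unfolding smooth_on_def by (metis iter_dd.simps(1))

lemma smooth_dd:
  assumes "smooth_on S f" shows "smooth_on S (\<lambda>x. frechet_derivative f (at x) v)"
proof -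
  have "iter_dd vs (\<lambda>x. frechet_derivative f (at x) v) = iter_dd (vs @ [v]) f" for vs
    by (simp add: iter_dd_append)
  then show ?thesis using assms unfolding smooth_on_def by simp
qed

lemma smooth_nth:
  fixes f :: "'a::real_normed_vector \<Rightarrow> real^'n"
  assumes "smooth_on S f" shows "smooth_on S (\<lambda>x. f x $ i)"
proof -
  have S: "open S" using assms smooth_on_def by blast
  let ?F = "{h. \<exists>g. smooth_on S g \<and> h = (\<lambda>x. (g x :: real^'n) $ i)}"
  show ?thesis
  proof (rule smooth_coind[OF S, of ?F])
    fix h assume "h \<in> ?F"
    then obtain g where g: "smooth_on S g" "h = (\<lambda>x. g x $ i)" by blast
    have hd: "(h has_derivative (\<lambda>v. frechet_derivative g (at x) v $ i)) (at x)" if "x \<in> S" for x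
    proof -
      have "g differentiable at x" using smooth_diff[OF g(1)] that S
        by (simp add: differentiable_on_eq_differentiable_at)
      then have "(g has_derivative frechet_derivative g (at x)) (at x)"
        using frechet_derivative_works by blast
      then show ?thesis unfolding g(2)
        using bounded_linear.has_derivative[OF bounded_linear_vec_nth] by blast
    qed
    then show "h differentiable_on S" using S
      by (meson differentiable_def differentiable_on_eq_differentiable_at)
    fix v
    show "\<exists>g\<in>?F. \<forall>x\<in>S. frechet_derivative h (at x) v = g x"
      using hd frechet_derivative_at smooth_dd[OF g(1)] by (smt (verit, best) mem_Collect_eq)
  next
    show "(\<lambda>x. f x $ i) \<in> ?F" using assms by blast
  qed
qed


inductive_set sm :: "phase set \<Rightarrow> (phase \<Rightarrow> real) set" for S where
  sm_const: "(\<lambda>z. c) \<in> sm S"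
| sm_tau: "(\<lambda>z. fst (snd (snd z))) \<in> sm S"
| sm_xi: "(\<lambda>z. snd (snd (snd z)) $ i) \<in> sm S"
| sm_x: "smooth_on UNIV g \<Longrightarrow> (\<lambda>z. g (fst (snd z))) \<in> sm S"
| sm_add: "f \<in> sm S \<Longrightarrow> g \<in> sm S \<Longrightarrow> (\<lambda>z. f z + g z) \<in> sm S"
| sm_mult: "f \<in> sm S \<Longrightarrow> g \<in> sm S \<Longrightarrow> (\<lambda>z. f z * g z) \<in> sm S"
| sm_inv: "f \<in> sm S \<Longrightarrow> (\<forall>z\<in>S. f z \<noteq> 0) \<Longrightarrow> (\<lambda>z. inverse (f z)) \<in> sm S"
| sm_sqrt: "f \<in> sm S \<Longrightarrow> (\<forall>z\<in>S. f z > 0) \<Longrightarrow> (\<lambda>z. sqrt (f z)) \<in> sm S"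

lemma sm_deriv:
  assumes "f \<in> sm S"
  shows "\<exists>G. (\<forall>v. G v \<in> sm S) \<and> (\<forall>x\<in>S. (f has_derivative (\<lambda>v. G v x)) (at x))"
  using assms
proof (induction rule: sm.induct)
  case (sm_const c)
  show ?case by (rule exI[of _ "\<lambda>v x. 0"]) (simp add: sm.sm_const)
next
  case sm_tau
  have "((\<lambda>z::phase. fst (snd (snd z))) has_derivative (\<lambda>v. fst (snd (snd v)))) (at x)" for x
    by (rule has_derivative_fst[OF has_derivative_snd[OF has_derivative_snd[OF has_derivative_ident]]])
  then show ?case
    by (intro exI[of _ "\<lambda>v x. fst (snd (snd v))"] conjI allI ballI sm.sm_const)
next
  case (sm_xi i)
  show ?case
  proof (rule exI[of _ "\<lambda>v x. snd (snd (snd v)) $ i"], intro conjI allI ballI)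
    fix x :: phase
    have "((\<lambda>z. snd (snd (snd z))) has_derivative (\<lambda>v. snd (snd (snd v)))) (at x)"
      by (rule has_derivative_snd[OF has_derivative_snd[OF has_derivative_snd[OF has_derivative_ident]]])
    then show "((\<lambda>z. snd (snd (snd z)) $ i) has_derivative (\<lambda>v. snd (snd (snd v)) $ i)) (at x)"
      using bounded_linear.has_derivative[OF bounded_linear_vec_nth] by blast
  qed (rule sm.sm_const)
next
  case (sm_x g)
  show ?case
  proof (rule exI[of _ "\<lambda>v z. frechet_derivative g (at (fst (snd z))) (fst (snd v))"], intro conjI allI ballI)
    fix v
    show "(\<lambda>z. frechet_derivative g (at (fst (snd z))) (fst (snd v))) \<in> sm S"
      using sm.sm_x[OF smooth_dd[OF sm_x]] .
  next
    fix x :: phase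
    have gd: "g differentiable at (fst (snd x))" using smooth_diff[OF sm_x]
      by (simp add: differentiable_on_eq_differentiable_at)
    have "((\<lambda>z. fst (snd z)) has_derivative (\<lambda>v. fst (snd v))) (at x)"
      by (rule has_derivative_fst[OF has_derivative_snd[OF has_derivative_ident]])
    from diff_chain_at[OF this gd[unfolded frechet_derivative_works]]
    show "((\<lambda>z. g (fst (snd z))) has_derivative (\<lambda>v. frechet_derivative g (at (fst (snd x))) (fst (snd v)))) (at x)"
      by (simp add: o_def)
  qed
next
  case (sm_add f g)
  then obtain F G where F: "\<forall>v. F v \<in> sm S" "\<forall>x\<in>S. (f has_derivative (\<lambda>v. F v x)) (at x)"
    and G: "\<forall>v. G v \<in> sm S" "\<forall>x\<in>S. (g has_derivative (\<lambda>v. G v x)) (at x)" by blast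
  show ?case
  proof (rule exI[of _ "\<lambda>v x. F v x + G v x"], intro conjI allI ballI)
    fix v show "(\<lambda>x. F v x + G v x) \<in> sm S"
      using F(1) G(1) by (intro sm.sm_add) blast+
  next
    fix x assume x: "x \<in> S"
    show "((\<lambda>z. f z + g z) has_derivative (\<lambda>v. F v x + G v x)) (at x)"
      by (rule has_derivative_add[OF F(2)[rule_format, OF x] G(2)[rule_format, OF x]])
  qed
next
  case (sm_mult f g)
  then obtain F G where F: "\<forall>v. F v \<in> sm S" "\<forall>x\<in>S. (f has_derivative (\<lambda>v. F v x)) (at x)"
    and G: "\<forall>v. G v \<in> sm S" "\<forall>x\<in>S. (g has_derivative (\<lambda>v. G v x)) (at x)" by blast
  show ?case
  proof (rule exI[of _ "\<lambda>v x. f x * G v x + F v x * g x"], intro conjI allI ballI)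
    fix v show "(\<lambda>x. f x * G v x + F v x * g x) \<in> sm S"
      using F(1) G(1) sm_mult(1,2) by (intro sm.sm_add sm.sm_mult) blast+
  next
    fix x assume x: "x \<in> S"
    show "((\<lambda>z. f z * g z) has_derivative (\<lambda>v. f x * G v x + F v x * g x)) (at x)"
      by (rule has_derivative_mult[OF F(2)[rule_format, OF x] G(2)[rule_format, OF x]])
  qed
next
  case (sm_inv f)
  then obtain F where F: "\<forall>v. F v \<in> sm S" "\<forall>x\<in>S. (f has_derivative (\<lambda>v. F v x)) (at x)" by blast
  have fi: "(\<lambda>z. inverse (f z)) \<in> sm S" using sm_inv(1,2) by (rule sm.sm_inv)
  show ?case
  proof (rule exI[of _ "\<lambda>v x. (- 1) * (inverse (f x) * F v x * inverse (f x))"], intro conjI allI ballI)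
    fix v show "(\<lambda>x. (- 1) * (inverse (f x) * F v x * inverse (f x))) \<in> sm S"
      using F(1) fi by (intro sm.sm_mult sm.sm_const) blast+
  next
    fix x assume x: "x \<in> S"
    show "((\<lambda>z. inverse (f z)) has_derivative (\<lambda>v. (- 1) * (inverse (f x) * F v x * inverse (f x)))) (at x)"
      using Deriv.has_derivative_inverse[OF _ F(2)[rule_format, OF x]] sm_inv(2) x by (simp only: mult_minus1 ball_simps) blast
  qed
next
  case (sm_sqrt f)
  then obtain F where F: "\<forall>v. F v \<in> sm S" "\<forall>x\<in>S. (f has_derivative (\<lambda>v. F v x)) (at x)" by blast
  have fi: "(\<lambda>z. inverse (sqrt (f z))) \<in> sm S" using sm_sqrt by (intro sm.sm_inv sm.sm_sqrt) auto
  show ?case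
  proof (rule exI[of _ "\<lambda>v x. F v x * (inverse (sqrt (f x)) / 2)"], intro conjI allI ballI)
    fix v have "(\<lambda>x. F v x * (inverse (sqrt (f x)) * (1/2))) \<in> sm S"
      using F(1) fi by (intro sm.sm_mult sm.sm_const) blast+
    then show "(\<lambda>x. F v x * (inverse (sqrt (f x)) / 2)) \<in> sm S" by simp
  next
    fix x assume x: "x \<in> S"
    show "((\<lambda>z. sqrt (f z)) has_derivative (\<lambda>v. F v x * (inverse (sqrt (f x)) / 2))) (at x)"
      by (rule has_derivative_real_sqrt[OF _ F(2)[rule_format, OF x]]) (use sm_sqrt(2) x in blast)
  qed
qed

lemma sm_smooth:
  assumes S: "open S" and f: "f \<in> sm S" shows "smooth_on S f"
proof (rule smooth_coind[OF S _ _ f])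
  fix f assume "f \<in> sm S"
  from sm_deriv[OF this] obtain G where G: "\<forall>v. G v \<in> sm S" "\<forall>x\<in>S. (f has_derivative (\<lambda>v. G v x)) (at x)" by blast
  then have "\<forall>x\<in>S. f differentiable at x" using differentiableI by blast
  then show "f differentiable_on S" using S
    by (simp add: differentiable_on_eq_differentiable_at)
  fix v
  have "\<forall>x\<in>S. frechet_derivative f (at x) v = G v x"
  proof
    fix x assume x: "x \<in> S"
    have e: "(\<lambda>v. G v x) = frechet_derivative f (at x)"
      using frechet_derivative_at[OF G(2)[rule_format, OF x]] .
    show "frechet_derivative f (at x) v = G v x" using fun_cong[OF e, of v] by simp
  qed
  then show "\<exists>g\<in>sm S. \<forall>x\<in>S. frechet_derivative f (at x) v = g x"
    using G(1) by blast
qed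

lemma sm_smooth_sum:
  fixes c :: "'k \<Rightarrow> 'b::real_normed_vector"
  assumes S: "open S" and K: "finite K" and f: "\<forall>k\<in>K. f k \<in> sm S"
  shows "smooth_on S (\<lambda>z. \<Sum>k\<in>K. f k z *\<^sub>R c k)"
proof -
  let ?F = "{h. \<exists>f. (\<forall>k\<in>K. f k \<in> sm S) \<and> h = (\<lambda>z. \<Sum>k\<in>K. f k z *\<^sub>R c k)}"
  show ?thesis
  proof (rule smooth_coind[OF S, of ?F])
    fix h assume "h \<in> ?F"
    then obtain f where f: "\<forall>k\<in>K. f k \<in> sm S" and h: "h = (\<lambda>z. \<Sum>k\<in>K. f k z *\<^sub>R c k)"
      unfolding mem_Collect_eq by (elim exE conjE) (rule that)
    have "\<forall>k\<in>K. \<exists>G. (\<forall>v. G v \<in> sm S) \<and> (\<forall>x\<in>S. (f k has_derivative (\<lambda>v. G v x)) (at x))"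
    proof
      fix k assume "k \<in> K"
      then have "f k \<in> sm S" using f by blast
      from sm_deriv[OF this] show "\<exists>G. (\<forall>v. G v \<in> sm S) \<and> (\<forall>x\<in>S. (f k has_derivative (\<lambda>v. G v x)) (at x))" .
    qed
    from bchoice[OF this] obtain G where G: "\<forall>k\<in>K. (\<forall>v. G k v \<in> sm S) \<and> (\<forall>x\<in>S. (f k has_derivative (\<lambda>v. G k v x)) (at x))"
      by (elim exE) (rule that)
    have hd: "(h has_derivative (\<lambda>v. \<Sum>k\<in>K. G k v x *\<^sub>R c k)) (at x)" if x: "x \<in> S" for x
      unfolding h
    proof (rule has_derivative_sum)
      fix k assume "k \<in> K"
      then have "(f k has_derivative (\<lambda>v. G k v x)) (at x)" using G x by blast
      then show "((\<lambda>z. f k z *\<^sub>R c k) has_derivative (\<lambda>v. G k v x *\<^sub>R c k)) (at x)"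
        by (rule has_derivative_scaleR_left)
    qed
    then have "\<forall>x\<in>S. h differentiable at x" using differentiableI by blast
    then show "h differentiable_on S" using S
      by (simp add: differentiable_on_eq_differentiable_at)
    fix v
    have mem: "(\<lambda>z. \<Sum>k\<in>K. G k v z *\<^sub>R c k) \<in> ?F"
      unfolding mem_Collect_eq by (rule exI[of _ "\<lambda>k. G k v"]) (use G in blast)
    have eq: "\<forall>x\<in>S. frechet_derivative h (at x) v = (\<Sum>k\<in>K. G k v x *\<^sub>R c k)"
    proof
      fix x assume x: "x \<in> S"
      have e: "(\<lambda>v. \<Sum>k\<in>K. G k v x *\<^sub>R c k) = frechet_derivative h (at x)"
        using frechet_derivative_at[OF hd[OF x]] .
      show "frechet_derivative h (at x) v = (\<Sum>k\<in>K. G k v x *\<^sub>R c k)" using fun_cong[OF e, of v] by simp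
    qed
    show "\<exists>g\<in>?F. \<forall>x\<in>S. frechet_derivative h (at x) v = g x"
    proof (rule bexI[of _ "\<lambda>z. \<Sum>k\<in>K. G k v z *\<^sub>R c k"])
      show "\<forall>x\<in>S. frechet_derivative h (at x) v = (\<lambda>z. \<Sum>k\<in>K. G k v z *\<^sub>R c k) x"
        using eq by simp
    qed (rule mem)
  qed (unfold mem_Collect_eq, rule exI[of _ f], use f in simp)
qed



definition adj3 :: "real^3^3 \<Rightarrow> real^3^3" where
  "adj3 A = vector [
     vector [A$2$2*A$3$3 - A$2$3*A$3$2, A$1$3*A$3$2 - A$1$2*A$3$3, A$1$2*A$2$3 - A$1$3*A$2$2],
     vector [A$2$3*A$3$1 - A$2$1*A$3$3, A$1$1*A$3$3 - A$1$3*A$3$1, A$1$3*A$2$1 - A$1$1*A$2$3],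
     vector [A$2$1*A$3$2 - A$2$2*A$3$1, A$1$2*A$3$1 - A$1$1*A$3$2, A$1$1*A$2$2 - A$1$2*A$2$1]]"

lemma adj3_mult: "adj3 A ** A = det A *\<^sub>R mat 1"
  by (simp add: vec_eq_iff forall_3 matrix_matrix_mult_def sum_3 det_3 adj3_def mat_def algebra_simps)

lemma adj3_scale: "adj3 (c *\<^sub>R A) = (c^2) *\<^sub>R adj3 A"
  by (simp add: vec_eq_iff forall_3 adj3_def algebra_simps power2_eq_square)



definition Rp :: "(real^3 \<Rightarrow> real) \<Rightarrow> (real^3 \<Rightarrow> real) \<Rightarrow> (real^3 \<Rightarrow> real^3) \<Rightarrow> real \<Rightarrow> phase \<Rightarrow> real" where
  "Rp rho p H gamma z = (case z of (t, x, \<tau>, \<xi>) \<Rightarrow>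
     (rho x)^2 * \<tau>^4 - rho x * (gamma * p x + (norm (H x))^2) * (norm \<xi>)^2 * \<tau>^2
     + gamma * p x * (norm \<xi>)^2 * (H x \<bullet> \<xi>)^2)"

lemma p2_entry: "p2 rho p H gamma (t, x, \<tau>, \<xi>) $ i $ j =
   (rho x * \<tau>^2 - (H x \<bullet> \<xi>)^2) * (if i = j then 1 else 0)
   - (gamma * p x + (norm (H x))^2) * (\<xi> $ i * \<xi> $ j)
   + (H x \<bullet> \<xi>) * (\<xi> $ i * H x $ j + H x $ i * \<xi> $ j)"
  by (simp add: p2_def outer_def mat_def)

lemma det_p2: "det (p2 rho p H gamma z) = q1 rho H z * Rp rho p H gamma z"
proof -
  obtain t x \<tau> \<xi> where z: "z = (t, x, \<tau>, \<xi>)" by (cases z) auto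
  show ?thesis
    unfolding z det_3 p2_entry q1_def Rp_def power2_norm_eq_inner inner_vec_def sum_3 inner_real_def
    by simp algebra
qed
lemma alg_a: fixes r T A s D :: real assumes "s^2 = D"
  shows "r*(T - (A - s)/2) * (r*(T - (A+s)/2)) = r^2*(T^2 - A*T + (A^2 - D)/4)"
  unfolding assms[symmetric] by (simp add: field_simps power2_eq_square)

lemma alg_b: fixes r T P K N X :: real assumes "r > 0"
  shows "r^2*(T^2 - ((P/r + K/r) * N)*T + (((P/r + K/r) * N)^2 - ((P/r - K/r)^2 * N^2 + 4 * ((N*K - X^2)/r) * (P/r) * N))/4)
     = r^2 * T^2 - r * (P + K) * N * T + P * N * X^2"
  using assms by (simp add: field_simps power2_eq_square)

lemma bsq_eq: "bsq rho H x \<xi> = ((norm \<xi>)^2 * (norm (H x))^2 - (H x \<bullet> \<xi>)^2) / rho x"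
proof -
  have "(norm (cross3 \<xi> (H x)))^2 = (norm \<xi> * norm (H x))^2 - (\<xi> \<bullet> H x)^2"
    using norm_cross_dot[of \<xi> "H x"] by linarith
  then show ?thesis unfolding bsq_def by (simp add: power_mult_distrib inner_commute)
qed

lemma q2q3: assumes "rho x > 0" "csq rho p gamma x > 0"
  shows "q2 rho p H gamma (t, x, \<tau>, \<xi>) * q3 rho p H gamma (t, x, \<tau>, \<xi>) = Rp rho p H gamma (t, x, \<tau>, \<xi>)"
proof -
  define D where "D = (csq rho p gamma x - hsq rho H x)^2 * (norm \<xi>)^4
             + 4 * bsq rho H x \<xi> * csq rho p gamma x * (norm \<xi>)^2"
  define A where "A = (csq rho p gamma x + hsq rho H x) * (norm \<xi>)^2"
  have cs: "cssq rho p H gamma x \<xi> = (A - sqrt D)/2" unfolding cssq_def A_def D_def by simp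
  have cf: "cfsq rho p H gamma x \<xi> = (A + sqrt D)/2" unfolding cfsq_def A_def D_def by simp
  have "q2 rho p H gamma (t, x, \<tau>, \<xi>) * q3 rho p H gamma (t, x, \<tau>, \<xi>) =
      (rho x)^2 * ((\<tau>^2)^2 - A * \<tau>^2 + (A^2 - D)/4)"
  proof -
    have "bsq rho H x \<xi> \<ge> 0" using assms unfolding bsq_def by simp
    then have "D \<ge> 0" unfolding D_def using assms(2) by simp
    then show ?thesis unfolding q2_def q3_def prod.case cs cf
      by (intro alg_a) simp
  qed
  also have "\<dots> = Rp rho p H gamma (t, x, \<tau>, \<xi>)"
    unfolding Rp_def prod.case A_def D_def bsq_eq csq_def hsq_def
    using alg_b[OF assms(1), of "\<tau>^2" "gamma * p x" "(norm (H x))^2" "(norm \<xi>)^2" "H x \<bullet> \<xi>"]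
    by (simp add: power_mult_distrib power2_eq_square[symmetric] flip: power_mult)
  finally show ?thesis .
qed


definition Dd :: "(real^3 \<Rightarrow> real) \<Rightarrow> (real^3 \<Rightarrow> real) \<Rightarrow> (real^3 \<Rightarrow> real^3) \<Rightarrow> real \<Rightarrow> real^3 \<Rightarrow> real^3 \<Rightarrow> real" where
  "Dd rho p H gamma x \<xi> = (csq rho p gamma x - hsq rho H x)^2 * (norm \<xi>)^4
             + 4 * bsq rho H x \<xi> * csq rho p gamma x * (norm \<xi>)^2"

lemma cssq_Dd: "cssq rho p H gamma x \<xi> = ((csq rho p gamma x + hsq rho H x) * (norm \<xi>)^2 - sqrt (Dd rho p H gamma x \<xi>)) / 2"
  unfolding cssq_def Dd_def ..
lemma cfsq_Dd: "cfsq rho p H gamma x \<xi> = ((csq rho p gamma x + hsq rho H x) * (norm \<xi>)^2 + sqrt (Dd rho p H gamma x \<xi>)) / 2"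
  unfolding cfsq_def Dd_def ..

locale pt_ctx =
  fixes rho p :: "real^3 \<Rightarrow> real" and H :: "real^3 \<Rightarrow> real^3" and gamma :: real and x :: "real^3" and \<xi> :: "real^3"
  assumes rpos: "rho x > 0" and cpos: "csq rho p gamma x > 0"
    and cr: "cross3 \<xi> (H x) \<noteq> 0" and hx: "\<xi> \<bullet> H x \<noteq> 0"
begin

lemma xi_nz: "\<xi> \<noteq> 0" using cr by auto
lemma n_pos: "(norm \<xi>)^2 > 0" using xi_nz by simp
lemma b_pos: "bsq rho H x \<xi> > 0" using cr rpos unfolding bsq_def by simp
lemma h_nn: "hsq rho H x \<ge> 0" using rpos unfolding hsq_def by simp

lemma Dd_pos: "Dd rho p H gamma x \<xi> > 0"
proof -
  have "4 * bsq rho H x \<xi> * csq rho p gamma x * (norm \<xi>)^2 > 0"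
    using b_pos cpos n_pos by simp
  moreover have "(csq rho p gamma x - hsq rho H x)^2 * (norm \<xi>)^4 \<ge> 0" by simp
  ultimately show ?thesis unfolding Dd_def by linarith
qed

lemma cf_pos: "cfsq rho p H gamma x \<xi> > 0"
proof -
  have "(csq rho p gamma x + hsq rho H x) * (norm \<xi>)^2 > 0" using cpos h_nn n_pos by simp
  moreover have "sqrt (Dd rho p H gamma x \<xi>) \<ge> 0" using Dd_pos by simp
  ultimately show ?thesis unfolding cfsq_Dd by (simp add: add_pos_nonneg)
qed

lemma cscf: "cssq rho p H gamma x \<xi> * cfsq rho p H gamma x \<xi> = gamma * p x * (norm \<xi>)^2 * (H x \<bullet> \<xi>)^2 / (rho x)^2"
proof -
  have q: "q2 rho p H gamma (0, x, 0, \<xi>) * q3 rho p H gamma (0, x, 0, \<xi>) = Rp rho p H gamma (0, x, 0, \<xi>)"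
    using q2q3[OF rpos cpos] .
  then have "(rho x)^2 * (cssq rho p H gamma x \<xi> * cfsq rho p H gamma x \<xi>) = gamma * p x * (norm \<xi>)^2 * (H x \<bullet> \<xi>)^2"
    unfolding q2_def q3_def Rp_def by (simp add: algebra_simps power2_eq_square)
  then show ?thesis using rpos by (simp add: field_simps)
qed

lemma cs_pos: "cssq rho p H gamma x \<xi> > 0"
proof -
  have gp: "gamma * p x > 0" using cpos rpos unfolding csq_def by (simp add: zero_less_divide_iff)
  have "(H x \<bullet> \<xi>)^2 > 0" using hx by (simp add: inner_commute)
  then have "cssq rho p H gamma x \<xi> * cfsq rho p H gamma x \<xi> > 0"
    unfolding cscf using gp n_pos rpos by simp
  then show ?thesis using cf_pos by (simp add: zero_less_mult_iff)
qed

lemma q1_zero_tau: "q1 rho H (t, x, \<tau>, \<xi>) = 0 \<Longrightarrow> \<tau> \<noteq> 0"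
  using hx unfolding q1_def by (auto simp: inner_commute)
lemma q2_zero_tau: "q2 rho p H gamma (t, x, \<tau>, \<xi>) = 0 \<Longrightarrow> \<tau> \<noteq> 0"
  using cs_pos rpos unfolding q2_def by auto
lemma q3_zero_tau: "q3 rho p H gamma (t, x, \<tau>, \<xi>) = 0 \<Longrightarrow> \<tau> \<noteq> 0"
  using cf_pos rpos unfolding q3_def by auto

lemma det_eq: "det (p2 rho p H gamma (t, x, \<tau>, \<xi>)) =
   q1 rho H (t, x, \<tau>, \<xi>) * q2 rho p H gamma (t, x, \<tau>, \<xi>) * q3 rho p H gamma (t, x, \<tau>, \<xi>)"
  using det_p2 q2q3[OF rpos cpos] by (simp add: mult.assoc)

end

lemma dil_simp: "dil s (t, x, \<tau>, \<xi>) = (t, x, s * \<tau>, s *\<^sub>R \<xi>)" unfolding dil_def by simp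

lemma p2_dil: "p2 rho p H gamma (dil s z) = (s^2) *\<^sub>R p2 rho p H gamma z"
proof -
  obtain t x \<tau> \<xi> where z: "z = (t, x, \<tau>, \<xi>)" by (cases z) auto
  show ?thesis unfolding z dil_simp
    by (simp add: vec_eq_iff p2_entry inner_scaleR_right algebra_simps power2_eq_square)
qed

lemma q1_dil: "q1 rho H (dil s z) = s^2 * q1 rho H z"
proof -
  obtain t x \<tau> \<xi> where z: "z = (t, x, \<tau>, \<xi>)" by (cases z) auto
  show ?thesis unfolding z dil_simp q1_def by (simp add: inner_scaleR_right algebra_simps power2_eq_square)
qed

lemma bsq_scale: "bsq rho H x (s *\<^sub>R \<xi>) = s^2 * bsq rho H x \<xi>"
  unfolding bsq_def by (simp add: cross_mult_left power_mult_distrib)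

lemma n2_scale: "(norm (s *\<^sub>R \<xi>))^2 = s^2 * (norm \<xi>)^2"
  by (simp add: power_mult_distrib)
lemma n4_scale: "(norm (s *\<^sub>R \<xi>))^4 = (s^2)^2 * (norm \<xi>)^4"
proof -
  have "(norm (s *\<^sub>R \<xi>))^4 = ((norm (s *\<^sub>R \<xi>))^2)^2" by (simp flip: power_mult)
  also have "\<dots> = (s^2)^2 * ((norm \<xi>)^2)^2" unfolding n2_scale by (simp add: power_mult_distrib)
  finally show ?thesis by (simp flip: power_mult)
qed

lemma Dd_scale: "Dd rho p H gamma x (s *\<^sub>R \<xi>) = (s^2)^2 * Dd rho p H gamma x \<xi>"
  unfolding Dd_def bsq_scale n2_scale n4_scale by (simp add: algebra_simps power2_eq_square)

lemma sqrt_s4: "sqrt ((s^2)^2 * D) = s^2 * sqrt D"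
  by (simp only: real_sqrt_mult real_sqrt_abs abs_of_nonneg[OF zero_le_power2])

lemma cs_scale: "cssq rho p H gamma x (s *\<^sub>R \<xi>) = s^2 * cssq rho p H gamma x \<xi>"
  unfolding cssq_Dd Dd_scale sqrt_s4 n2_scale by (simp add: algebra_simps)
lemma cf_scale: "cfsq rho p H gamma x (s *\<^sub>R \<xi>) = s^2 * cfsq rho p H gamma x \<xi>"
  unfolding cfsq_Dd Dd_scale sqrt_s4 n2_scale by (simp add: algebra_simps)

lemma q2_dil: "q2 rho p H gamma (dil s z) = s^2 * q2 rho p H gamma z"
proof -
  obtain t x \<tau> \<xi> where z: "z = (t, x, \<tau>, \<xi>)" by (cases z) auto
  show ?thesis unfolding z dil_simp q2_def by (simp add: cs_scale algebra_simps power2_eq_square)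
qed
lemma q3_dil: "q3 rho p H gamma (dil s z) = s^2 * q3 rho p H gamma z"
proof -
  obtain t x \<tau> \<xi> where z: "z = (t, x, \<tau>, \<xi>)" by (cases z) auto
  show ?thesis unfolding z dil_simp q3_def by (simp add: cf_scale algebra_simps power2_eq_square)
qed


definition xf :: "phase \<Rightarrow> real^3" where "xf z = fst (snd z)"
definition tf :: "phase \<Rightarrow> real" where "tf z = fst (snd (snd z))"
definition kf :: "phase \<Rightarrow> real^3" where "kf z = snd (snd (snd z))"

lemma xf_simp[simp]: "xf (t, x, \<tau>, \<xi>) = x" and tf_simp[simp]: "tf (t, x, \<tau>, \<xi>) = \<tau>"
  and kf_simp[simp]: "kf (t, x, \<tau>, \<xi>) = \<xi>"
  by (simp_all add: xf_def tf_def kf_def)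

lemma sm_X: "smooth_on UNIV g \<Longrightarrow> (\<lambda>z. g (xf z)) \<in> sm S"
  unfolding xf_def by (rule sm.sm_x)
lemma sm_T: "(\<lambda>z. tf z) \<in> sm S"
  unfolding tf_def by (rule sm.sm_tau)
lemma sm_K: "(\<lambda>z. kf z $ i) \<in> sm S"
  unfolding kf_def by (rule sm.sm_xi)
lemma sm_HX: "smooth_on UNIV H \<Longrightarrow> (\<lambda>z. H (xf z) $ i) \<in> sm S"
  using sm_X[OF smooth_nth[of UNIV H i]] by simp

lemma sm_diff: "f \<in> sm S \<Longrightarrow> g \<in> sm S \<Longrightarrow> (\<lambda>z. f z - g z) \<in> sm S"
proof -
  assume "f \<in> sm S" "g \<in> sm S"
  then have "(\<lambda>z. f z + (-1) * g z) \<in> sm S" by (intro sm.sm_add sm.sm_mult sm.sm_const)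
  then show ?thesis by simp
qed

lemma sm_power: "f \<in> sm S \<Longrightarrow> (\<lambda>z. f z ^ n) \<in> sm S"
proof (induction n)
  case 0 then show ?case using sm.sm_const[of 1 S] by simp
next
  case (Suc n) then show ?case using sm.sm_mult[OF Suc.prems Suc.IH[OF Suc.prems]] by simp
qed

lemma sm_sum: "finite I \<Longrightarrow> (\<forall>i\<in>I. f i \<in> sm S) \<Longrightarrow> (\<lambda>z. \<Sum>i\<in>I. f i z) \<in> sm S"
proof (induction I rule: finite_induct)
  case empty then show ?case using sm.sm_const[of 0 S] by simp
next
  case (insert a I)
  then have "(\<lambda>z. f a z + (\<Sum>i\<in>I. f i z)) \<in> sm S" by (intro sm.sm_add) auto
  then show ?case using insert by simp
qed

lemma sm_inner3:
  fixes a b :: "phase \<Rightarrow> real^3"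
  assumes "\<And>i. (\<lambda>z. a z $ i) \<in> sm S" "\<And>i. (\<lambda>z. b z $ i) \<in> sm S"
  shows "(\<lambda>z. a z \<bullet> b z) \<in> sm S"
proof -
  have "(\<lambda>z. \<Sum>i\<in>UNIV. a z $ i * b z $ i) \<in> sm S"
    by (rule sm_sum) (use assms in \<open>auto intro: sm.sm_mult\<close>)
  then show ?thesis by (simp add: inner_vec_def)
qed

lemma sm_normsq3:
  fixes a :: "phase \<Rightarrow> real^3"
  assumes "\<And>i. (\<lambda>z. a z $ i) \<in> sm S"
  shows "(\<lambda>z. (norm (a z))^2) \<in> sm S"
  using sm_inner3[OF assms assms] by (simp add: power2_norm_eq_inner)

lemma sm_inv_pos: assumes "f \<in> sm S" "\<forall>z. f z > 0" shows "(\<lambda>z. inverse (f z)) \<in> sm S"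
proof (rule sm.sm_inv[OF assms(1)])
  show "\<forall>z\<in>S. f z \<noteq> 0" using assms(2) by (metis order_less_irrefl)
qed

locale smctx =
  fixes rho p :: "real^3 \<Rightarrow> real" and H :: "real^3 \<Rightarrow> real^3" and gamma :: real
  assumes sr: "smooth_on UNIV rho" and sp: "smooth_on UNIV p" and sH: "smooth_on UNIV H"
    and rpos: "\<forall>x. rho x > 0"
begin

lemma sm_rho: "(\<lambda>z. rho (xf z)) \<in> sm S" using sm_X[OF sr] .
lemma sm_p: "(\<lambda>z. p (xf z)) \<in> sm S" using sm_X[OF sp] .
lemma sm_H: "(\<lambda>z. H (xf z) $ i) \<in> sm S" using sm_HX[OF sH] .
lemma sm_rinv: "(\<lambda>z. inverse (rho (xf z))) \<in> sm S" using sm_inv_pos[OF sm_rho] rpos by simp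
lemma sm_hx: "(\<lambda>z. H (xf z) \<bullet> kf z) \<in> sm S" by (rule sm_inner3) (rule sm_H, rule sm_K)
lemma sm_n2: "(\<lambda>z. (norm (kf z))^2) \<in> sm S" by (rule sm_normsq3) (rule sm_K)
lemma sm_nH2: "(\<lambda>z. (norm (H (xf z)))^2) \<in> sm S" by (rule sm_normsq3) (rule sm_H)

lemmas smI = sm.sm_add sm.sm_mult sm_diff sm_power sm.sm_const sm_T sm_K sm_rho sm_p sm_H sm_rinv sm_hx sm_n2 sm_nH2

lemma sm_csq: "(\<lambda>z. csq rho p gamma (xf z)) \<in> sm S"
proof -
  have "(\<lambda>z. gamma * p (xf z) * inverse (rho (xf z))) \<in> sm S" by (intro smI)
  then show ?thesis by (simp add: csq_def field_simps)
qed
lemma sm_hsq: "(\<lambda>z. hsq rho H (xf z)) \<in> sm S"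
proof -
  have "(\<lambda>z. (norm (H (xf z)))^2 * inverse (rho (xf z))) \<in> sm S" by (intro smI)
  then show ?thesis by (simp add: hsq_def field_simps)
qed
lemma sm_bsq: "(\<lambda>z. bsq rho H (xf z) (kf z)) \<in> sm S"
proof -
  have "(\<lambda>z. ((norm (kf z))^2 * (norm (H (xf z)))^2 - (H (xf z) \<bullet> kf z)^2) * inverse (rho (xf z))) \<in> sm S"
    by (intro smI)
  then show ?thesis by (simp add: bsq_eq field_simps)
qed
lemma sm_Dd: "(\<lambda>z. Dd rho p H gamma (xf z) (kf z)) \<in> sm S"
proof -
  have "(\<lambda>z. (csq rho p gamma (xf z) - hsq rho H (xf z))^2 * ((norm (kf z))^2)^2
             + 4 * bsq rho H (xf z) (kf z) * csq rho p gamma (xf z) * (norm (kf z))^2) \<in> sm S"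
    by (intro smI sm_csq sm_hsq sm_bsq)
  then show ?thesis by (simp add: Dd_def flip: power_mult)
qed

lemma sm_q1: "q1 rho H \<in> sm S"
proof -
  have "(\<lambda>z. rho (xf z) * (tf z)^2 - (H (xf z) \<bullet> kf z)^2) \<in> sm S" by (intro smI)
  moreover have "q1 rho H = (\<lambda>z. rho (xf z) * (tf z)^2 - (H (xf z) \<bullet> kf z)^2)"
    by (rule ext) (simp add: q1_def split: prod.splits)
  ultimately show ?thesis by simp
qed

lemma sm_q2: assumes "\<forall>z\<in>S. Dd rho p H gamma (xf z) (kf z) > 0" shows "q2 rho p H gamma \<in> sm S"
proof -
  have "(\<lambda>z. rho (xf z) * ((tf z)^2 - ((csq rho p gamma (xf z) + hsq rho H (xf z)) * (norm (kf z))^2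
      - sqrt (Dd rho p H gamma (xf z) (kf z))) * (1/2))) \<in> sm S"
    by (intro smI sm_csq sm_hsq sm.sm_sqrt sm_Dd assms)
  moreover have "q2 rho p H gamma = (\<lambda>z. rho (xf z) * ((tf z)^2 - ((csq rho p gamma (xf z) + hsq rho H (xf z)) * (norm (kf z))^2
      - sqrt (Dd rho p H gamma (xf z) (kf z))) * (1/2)))"
    by (rule ext) (simp add: q2_def cssq_Dd split: prod.splits)
  ultimately show ?thesis by simp
qed

lemma sm_q3: assumes "\<forall>z\<in>S. Dd rho p H gamma (xf z) (kf z) > 0" shows "q3 rho p H gamma \<in> sm S"
proof -
  have "(\<lambda>z. rho (xf z) * ((tf z)^2 - ((csq rho p gamma (xf z) + hsq rho H (xf z)) * (norm (kf z))^2
      + sqrt (Dd rho p H gamma (xf z) (kf z))) * (1/2))) \<in> sm S"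
    by (intro smI sm_csq sm_hsq sm.sm_sqrt sm_Dd assms)
  moreover have "q3 rho p H gamma = (\<lambda>z. rho (xf z) * ((tf z)^2 - ((csq rho p gamma (xf z) + hsq rho H (xf z)) * (norm (kf z))^2
      + sqrt (Dd rho p H gamma (xf z) (kf z))) * (1/2)))"
    by (rule ext) (simp add: q3_def cfsq_Dd split: prod.splits)
  ultimately show ?thesis by simp
qed

lemma sm_p2: "(\<lambda>z. p2 rho p H gamma z $ i $ j) \<in> sm S"
proof -
  have "(\<lambda>z. (rho (xf z) * (tf z)^2 - (H (xf z) \<bullet> kf z)^2) * (if i = j then 1 else 0)
   - (gamma * p (xf z) + (norm (H (xf z)))^2) * (kf z $ i * kf z $ j)
   + (H (xf z) \<bullet> kf z) * (kf z $ i * H (xf z) $ j + H (xf z) $ i * kf z $ j)) \<in> sm S"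
    by (intro smI)
  moreover have "(\<lambda>z. p2 rho p H gamma z $ i $ j) = (\<lambda>z. (rho (xf z) * (tf z)^2 - (H (xf z) \<bullet> kf z)^2) * (if i = j then 1 else 0)
   - (gamma * p (xf z) + (norm (H (xf z)))^2) * (kf z $ i * kf z $ j)
   + (H (xf z) \<bullet> kf z) * (kf z $ i * H (xf z) $ j + H (xf z) $ i * kf z $ j))"
  proof (rule ext)
    fix z :: phase
    obtain t x \<tau> \<xi> where z: "z = (t, x, \<tau>, \<xi>)" by (cases z) auto
    show "p2 rho p H gamma z $ i $ j = (rho (xf z) * (tf z)^2 - (H (xf z) \<bullet> kf z)^2) * (if i = j then 1 else 0)
   - (gamma * p (xf z) + (norm (H (xf z)))^2) * (kf z $ i * kf z $ j)
   + (H (xf z) \<bullet> kf z) * (kf z $ i * H (xf z) $ j + H (xf z) $ i * kf z $ j)"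
      unfolding z xf_simp tf_simp kf_simp by (rule p2_entry)
  qed
  ultimately show ?thesis by simp
qed

end

lemma sm_adj3:
  assumes "\<And>i j. (\<lambda>z. A z $ i $ j) \<in> sm S"
  shows "(\<lambda>z. adj3 (A z) $ i $ j) \<in> sm S"
proof -
  have "(\<lambda>z. adj3 (A z) $ a $ b) \<in> sm S" if "a \<in> {1,2,3}" "b \<in> {1,2,3}" for a b :: 3
    using that by (auto simp: adj3_def intro!: sm_diff sm.sm_mult assms)
  moreover have "i \<in> {1,2,3}" "j \<in> {1,2,3}" using exhaust_3 by auto
  ultimately show ?thesis by blast
qed

definition Emat :: "3 \<Rightarrow> 3 \<Rightarrow> real^3^3" where "Emat i j = (\<chi> k l. if k = i \<and> l = j then 1 else 0)"

lemma mat_decomp: "M = (\<Sum>ij\<in>UNIV. M $ fst ij $ snd ij *\<^sub>R Emat (fst ij) (snd ij))"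
proof -
  have "(\<Sum>ij\<in>UNIV. M $ fst ij $ snd ij *\<^sub>R Emat (fst ij) (snd ij)) $ k $ l = M $ k $ l" for k l
  proof -
    have "(\<Sum>ij\<in>UNIV. M $ fst ij $ snd ij *\<^sub>R Emat (fst ij) (snd ij)) $ k $ l
        = (\<Sum>ij\<in>UNIV. if ij = (k, l) then M $ k $ l else 0)"
      unfolding sum_component by (rule sum.cong) (auto simp: Emat_def)
    also have "\<dots> = M $ k $ l" by simp
    finally show ?thesis .
  qed
  then show ?thesis by (simp add: vec_eq_iff)
qed


lemma fd_dir:
  fixes f :: "phase \<Rightarrow> real"
  assumes "f differentiable at z" "((\<lambda>s. f (z + s *\<^sub>R e)) has_real_derivative d) (at 0)"
  shows "frechet_derivative f (at z) e = d"
proof -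
  have Df: "(f has_derivative frechet_derivative f (at z)) (at (z + 0 *\<^sub>R e))"
    using assms(1)[unfolded frechet_derivative_works] by simp
  have g: "((\<lambda>s::real. z + s *\<^sub>R e) has_derivative (\<lambda>h. h *\<^sub>R e)) (at 0)"
    by (auto intro!: derivative_eq_intros)
  have c: "((\<lambda>s. f (z + s *\<^sub>R e)) has_derivative (\<lambda>h. frechet_derivative f (at z) (h *\<^sub>R e))) (at 0)"
    using diff_chain_at[OF g Df] by (simp add: o_def)
  have "((\<lambda>s. f (z + s *\<^sub>R e)) has_derivative (\<lambda>h. h * d)) (at 0)"
  proof -
    have "(\<lambda>h. h * d) = (*) d" by (auto simp: mult.commute)
    then show ?thesis using assms(2) unfolding has_field_derivative_def by simp
  qed
  from has_derivative_unique[OF c this]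
  have "(\<lambda>h. frechet_derivative f (at z) (h *\<^sub>R e)) = (\<lambda>h. h * d)" .
  from fun_cong[OF this, of 1] show ?thesis by simp
qed

definition e_tau :: phase where "e_tau = (0, 0, 1, 0)"

lemma line_tau: "(t, x, \<tau>, \<xi>) + s *\<^sub>R e_tau = (t, x, \<tau> + s, \<xi>)"
  by (simp add: e_tau_def)

lemma rpt_from:
  assumes "smooth_on U q" "\<forall>z\<in>U. q z = 0 \<longrightarrow> frechet_derivative q (at z) e_tau \<noteq> 0"
  shows "real_principal_type U q"
  unfolding real_principal_type_def
proof (intro conjI ballI impI allI)
  show "smooth_on U q" by fact
  fix z assume z: "z \<in> U" "q z = 0"
  obtain t x \<tau> \<xi> where zz: "z = (t, x, \<tau>, \<xi>)" by (cases z) auto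
  have nz: "fst (ham q z) \<noteq> 0" using assms(2) z unfolding ham_def Let_def e_tau_def by simp
  then show "ham q z \<noteq> 0" by auto
  fix c :: real
  have "fst (c *\<^sub>R radial z) = 0" unfolding zz radial_def by simp
  then show "ham q z \<noteq> c *\<^sub>R radial z" using nz by metis
qed

lemma fd_q1:
  assumes "q1 rho H differentiable at (t, x, \<tau>, \<xi>)"
  shows "frechet_derivative (q1 rho H) (at (t, x, \<tau>, \<xi>)) e_tau = 2 * rho x * \<tau>"
proof (rule fd_dir[OF assms])
  have "((\<lambda>s. rho x * (\<tau> + s)^2 - (H x \<bullet> \<xi>)^2) has_real_derivative 2 * rho x * \<tau>) (at 0)"
    by (auto intro!: derivative_eq_intros)
  then show "((\<lambda>s. q1 rho H ((t, x, \<tau>, \<xi>) + s *\<^sub>R e_tau)) has_real_derivative 2 * rho x * \<tau>) (at 0)"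
    unfolding line_tau q1_def by simp
qed

lemma fd_q2:
  assumes "q2 rho p H gamma differentiable at (t, x, \<tau>, \<xi>)"
  shows "frechet_derivative (q2 rho p H gamma) (at (t, x, \<tau>, \<xi>)) e_tau = 2 * rho x * \<tau>"
proof (rule fd_dir[OF assms])
  have "((\<lambda>s. rho x * ((\<tau> + s)^2 - cssq rho p H gamma x \<xi>)) has_real_derivative 2 * rho x * \<tau>) (at 0)"
    by (auto intro!: derivative_eq_intros)
  then show "((\<lambda>s. q2 rho p H gamma ((t, x, \<tau>, \<xi>) + s *\<^sub>R e_tau)) has_real_derivative 2 * rho x * \<tau>) (at 0)"
    unfolding line_tau q2_def by simp
qed

lemma fd_q3:
  assumes "q3 rho p H gamma differentiable at (t, x, \<tau>, \<xi>)"
  shows "frechet_derivative (q3 rho p H gamma) (at (t, x, \<tau>, \<xi>)) e_tau = 2 * rho x * \<tau>"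
proof (rule fd_dir[OF assms])
  have "((\<lambda>s. rho x * ((\<tau> + s)^2 - cfsq rho p H gamma x \<xi>)) has_real_derivative 2 * rho x * \<tau>) (at 0)"
    by (auto intro!: derivative_eq_intros)
  then show "((\<lambda>s. q3 rho p H gamma ((t, x, \<tau>, \<xi>) + s *\<^sub>R e_tau)) has_real_derivative 2 * rho x * \<tau>) (at 0)"
    unfolding line_tau q3_def by simp
qed

lemma Omega_eq: "Omega H = {z. kf z \<bullet> H (xf z) \<noteq> 0} \<inter> {z. cross3 (kf z) (H (xf z)) \<noteq> 0}"
  unfolding Omega_def by (auto split: prod.splits)

lemma Omega_open:
  assumes "smooth_on UNIV H" shows "open (Omega H)"
proof -
  have cH: "continuous_on UNIV H"
    using differentiable_imp_continuous_on[OF smooth_diff[OF assms]] .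
  have ck: "continuous_on UNIV kf" unfolding kf_def by (intro continuous_intros)
  have cx: "continuous_on UNIV xf" unfolding xf_def by (intro continuous_intros)
  have cHx: "continuous_on UNIV (\<lambda>z. H (xf z))"
    using continuous_on_compose[OF cx, of H] continuous_on_subset[OF cH] by (simp add: o_def)
  have "open {z. kf z \<bullet> H (xf z) \<noteq> 0}"
    by (rule open_Collect_neq) (use ck cHx in \<open>auto intro!: continuous_intros\<close>)
  moreover have "open {z. cross3 (kf z) (H (xf z)) \<noteq> 0}"
    by (rule open_Collect_neq) (use ck cHx in \<open>auto intro!: continuous_on_cross\<close>)
  ultimately show ?thesis unfolding Omega_eq by auto
qed

lemma Omega_conic: "conic (Omega H)"
  unfolding conic_def Omega_def dil_def
  by (auto split: prod.splits simp: cross_mult_left)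

lemma conic_Int: "conic A \<Longrightarrow> conic B \<Longrightarrow> conic (A \<inter> B)"
  unfolding conic_def by auto


lemma reduces_gen:
  fixes P :: "phase \<Rightarrow> real^3^3" and q a b :: "phase \<Rightarrow> real"
  assumes U: "open U" "conic U" "z \<in> U"
    and Pdet: "\<forall>w\<in>U. det (P w) = q w * a w * b w"
    and nz: "\<forall>w\<in>U. a w * b w \<noteq> 0"
    and sq: "q \<in> sm U" "a \<in> sm U" "b \<in> sm U"
    and sP: "\<And>i j. (\<lambda>w. P w $ i $ j) \<in> sm U"
    and hP: "\<And>w s. P (dil s w) = s^2 *\<^sub>R P w"
    and ha: "\<And>w s. a (dil s w) = s^2 * a w" "\<And>w s. b (dil s w) = s^2 * b w"
    and hq: "\<forall>w\<in>U. q w = 0 \<longrightarrow> frechet_derivative q (at w) e_tau \<noteq> 0"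
  shows "reduces_at P U q z"
proof -
  define pt where "pt w = inverse (a w * b w) *\<^sub>R adj3 (P w)" for w
  have ent: "(\<lambda>w. inverse (a w * b w) * adj3 (P w) $ i $ j) \<in> sm U" for i j
    by (intro sm.sm_mult sm.sm_inv sm_adj3 sP sq nz)
  have pt_eq: "pt = (\<lambda>w. \<Sum>ij\<in>UNIV. (inverse (a w * b w) * adj3 (P w) $ fst ij $ snd ij) *\<^sub>R Emat (fst ij) (snd ij))"
  proof (rule ext)
    fix w
    have "pt w = (\<Sum>ij\<in>UNIV. pt w $ fst ij $ snd ij *\<^sub>R Emat (fst ij) (snd ij))" by (rule mat_decomp)
    then show "pt w = (\<Sum>ij\<in>UNIV. (inverse (a w * b w) * adj3 (P w) $ fst ij $ snd ij) *\<^sub>R Emat (fst ij) (snd ij))"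
      by (simp add: pt_def)
  qed
  have smooth: "smooth_on U pt"
    unfolding pt_eq by (rule sm_smooth_sum[OF U(1)]) (use ent in auto)
  have hom: "homogeneous_on U 0 pt"
    unfolding homogeneous_on_def
  proof (intro ballI allI impI)
    fix w and s :: real assume "w \<in> U" "s > 0"
    then have s: "s \<noteq> 0" by simp
    show "pt (dil s w) = s ^ 0 *\<^sub>R pt w"
      unfolding pt_def hP ha adj3_scale using s by (simp add: field_simps power2_eq_square)
  qed
  have mult: "\<forall>w\<in>U. pt w ** P w = q w *\<^sub>R mat 1"
  proof
    fix w assume w: "w \<in> U"
    have "pt w ** P w = inverse (a w * b w) *\<^sub>R (adj3 (P w) ** P w)"
      unfolding pt_def by (simp add: scalar_matrix_assoc)
    also have "\<dots> = (inverse (a w * b w) * (q w * a w * b w)) *\<^sub>R mat 1"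
      unfolding adj3_mult using Pdet w by simp
    also have "\<dots> = q w *\<^sub>R mat 1" using nz w by (simp add: field_simps)
    finally show "pt w ** P w = q w *\<^sub>R mat 1" .
  qed
  have rpt: "real_principal_type U q"
    by (rule rpt_from[OF sm_smooth[OF U(1) sq(1)] hq])
  show ?thesis unfolding reduces_at_def
    using U smooth hom mult rpt by blast
qed


theorem proposition5p2:
  fixes rho p :: "real^3 \<Rightarrow> real" and H :: "real^3 \<Rightarrow> real^3" and gamma :: real
    and \<Gamma>1 \<Gamma>2 \<Gamma>3 :: "phase set"
  assumes "smooth_on UNIV rho" and "smooth_on UNIV p" and "smooth_on UNIV H"
    and "\<forall>x. rho x > 0"
    and "\<forall>x. csq rho p gamma x > 0"
    and "\<forall>x. 0 < (norm (H x))^2 \<and> (norm (H x))^2 \<noteq> rho x * csq rho p gamma x"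
    and "open \<Gamma>1" "open \<Gamma>2" "open \<Gamma>3"
    and "conic \<Gamma>1" "conic \<Gamma>2" "conic \<Gamma>3"
    and "{z \<in> Omega H. q1 rho H z = 0} \<subseteq> \<Gamma>1"
    and "{z \<in> Omega H. q2 rho p H gamma z = 0} \<subseteq> \<Gamma>2"
    and "{z \<in> Omega H. q3 rho p H gamma z = 0} \<subseteq> \<Gamma>3"
    and "\<Gamma>1 \<inter> \<Gamma>2 = {}" "\<Gamma>1 \<inter> \<Gamma>3 = {}" "\<Gamma>2 \<inter> \<Gamma>3 = {}"
  shows "{z \<in> Omega H. det (p2 rho p H gamma z) = 0} =
           {z \<in> Omega H. (z \<in> \<Gamma>1 \<and> q1 rho H z = 0) \<or> (z \<in> \<Gamma>2 \<and> q2 rho p H gamma z = 0)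
                          \<or> (z \<in> \<Gamma>3 \<and> q3 rho p H gamma z = 0)}
       \<and> (\<forall>z \<in> Omega H. det (p2 rho p H gamma z) = 0 \<longrightarrow>
            (z \<in> \<Gamma>1 \<and> q1 rho H z = 0 \<and> reduces_at (p2 rho p H gamma) (Omega H \<inter> \<Gamma>1) (q1 rho H) z)
          \<or> (z \<in> \<Gamma>2 \<and> q2 rho p H gamma z = 0 \<and> reduces_at (p2 rho p H gamma) (Omega H \<inter> \<Gamma>2) (q2 rho p H gamma) z)
          \<or> (z \<in> \<Gamma>3 \<and> q3 rho p H gamma z = 0 \<and> reduces_at (p2 rho p H gamma) (Omega H \<inter> \<Gamma>3) (q3 rho p H gamma) z))"
proof -
  note A = assms
  interpret smctx rho p H gamma using A(1-4) by unfold_locales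
  have ctx: "pt_ctx rho p H gamma x \<xi>" if "(t, x, \<tau>, \<xi>) \<in> Omega H" for t x \<tau> \<xi>
    using that A(4,5) unfolding Omega_def by unfold_locales auto
  have det: "det (p2 rho p H gamma w) = q1 rho H w * q2 rho p H gamma w * q3 rho p H gamma w"
    if "w \<in> Omega H" for w
  proof -
    obtain t x \<tau> \<xi> where w: "w = (t, x, \<tau>, \<xi>)" by (cases w) auto
    show ?thesis using pt_ctx.det_eq[OF ctx] that unfolding w by blast
  qed
  have Dpos: "\<forall>w\<in>U. Dd rho p H gamma (xf w) (kf w) > 0" if "U \<subseteq> Omega H" for U
  proof
    fix w assume "w \<in> U"
    then have wO: "w \<in> Omega H" using that by blast
    obtain t x \<tau> \<xi> where w: "w = (t, x, \<tau>, \<xi>)" by (cases w) auto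
    show "Dd rho p H gamma (xf w) (kf w) > 0" using pt_ctx.Dd_pos[OF ctx] wO unfolding w by simp
  qed
  have diffU: "q differentiable at w" if "open U" "q \<in> sm U" "w \<in> U" for U q w
    using smooth_diff[OF sm_smooth[OF that(1,2)]] that(1,3)
    by (simp add: differentiable_on_eq_differentiable_at)
  have oO: "open (Omega H)" using Omega_open[OF A(3)] .
  have hq1: "\<forall>w\<in>U. q1 rho H w = 0 \<longrightarrow> frechet_derivative (q1 rho H) (at w) e_tau \<noteq> 0"
    if "open U" "U \<subseteq> Omega H" for U
  proof (intro ballI impI)
    fix w assume wU: "w \<in> U" and q: "q1 rho H w = 0"
    obtain t x \<tau> \<xi> where w: "w = (t, x, \<tau>, \<xi>)" by (cases w) auto
    have wO: "(t, x, \<tau>, \<xi>) \<in> Omega H" using wU that w by blast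
    have "\<tau> \<noteq> 0" using pt_ctx.q1_zero_tau[OF ctx[OF wO]] q w by blast
    moreover have "rho x > 0" using A(4) by blast
    moreover have "frechet_derivative (q1 rho H) (at w) e_tau = 2 * rho x * \<tau>"
      unfolding w by (rule fd_q1) (use diffU[OF that(1) sm_q1 wU] w in simp)
    ultimately show "frechet_derivative (q1 rho H) (at w) e_tau \<noteq> 0" by simp
  qed
  have hq2: "\<forall>w\<in>U. q2 rho p H gamma w = 0 \<longrightarrow> frechet_derivative (q2 rho p H gamma) (at w) e_tau \<noteq> 0"
    if "open U" "U \<subseteq> Omega H" for U
  proof (intro ballI impI)
    fix w assume wU: "w \<in> U" and q: "q2 rho p H gamma w = 0"
    obtain t x \<tau> \<xi> where w: "w = (t, x, \<tau>, \<xi>)" by (cases w) auto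
    have wO: "(t, x, \<tau>, \<xi>) \<in> Omega H" using wU that w by blast
    have "\<tau> \<noteq> 0" using pt_ctx.q2_zero_tau[OF ctx[OF wO]] q w by blast
    moreover have "rho x > 0" using A(4) by blast
    moreover have "frechet_derivative (q2 rho p H gamma) (at w) e_tau = 2 * rho x * \<tau>"
      unfolding w by (rule fd_q2) (use diffU[OF that(1) sm_q2[OF Dpos[OF that(2)]] wU] w in simp)
    ultimately show "frechet_derivative (q2 rho p H gamma) (at w) e_tau \<noteq> 0" by simp
  qed
  have hq3: "\<forall>w\<in>U. q3 rho p H gamma w = 0 \<longrightarrow> frechet_derivative (q3 rho p H gamma) (at w) e_tau \<noteq> 0"
    if "open U" "U \<subseteq> Omega H" for U
  proof (intro ballI impI)
    fix w assume wU: "w \<in> U" and q: "q3 rho p H gamma w = 0"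
    obtain t x \<tau> \<xi> where w: "w = (t, x, \<tau>, \<xi>)" by (cases w) auto
    have wO: "(t, x, \<tau>, \<xi>) \<in> Omega H" using wU that w by blast
    have "\<tau> \<noteq> 0" using pt_ctx.q3_zero_tau[OF ctx[OF wO]] q w by blast
    moreover have "rho x > 0" using A(4) by blast
    moreover have "frechet_derivative (q3 rho p H gamma) (at w) e_tau = 2 * rho x * \<tau>"
      unfolding w by (rule fd_q3) (use diffU[OF that(1) sm_q3[OF Dpos[OF that(2)]] wU] w in simp)
    ultimately show "frechet_derivative (q3 rho p H gamma) (at w) e_tau \<noteq> 0" by simp
  qed
  have nz1: "q1 rho H w \<noteq> 0" if "w \<in> Omega H" "w \<notin> \<Gamma>1" for w using that A(13) by blast
  have nz2: "q2 rho p H gamma w \<noteq> 0" if "w \<in> Omega H" "w \<notin> \<Gamma>2" for w using that A(14) by blast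
  have nz3: "q3 rho p H gamma w \<noteq> 0" if "w \<in> Omega H" "w \<notin> \<Gamma>3" for w using that A(15) by blast
  have part1: "{z \<in> Omega H. det (p2 rho p H gamma z) = 0} =
           {z \<in> Omega H. (z \<in> \<Gamma>1 \<and> q1 rho H z = 0) \<or> (z \<in> \<Gamma>2 \<and> q2 rho p H gamma z = 0)
                          \<or> (z \<in> \<Gamma>3 \<and> q3 rho p H gamma z = 0)}"
  proof (rule Collect_cong)
    fix z
    show "(z \<in> Omega H \<and> det (p2 rho p H gamma z) = 0) =
      (z \<in> Omega H \<and> ((z \<in> \<Gamma>1 \<and> q1 rho H z = 0) \<or> (z \<in> \<Gamma>2 \<and> q2 rho p H gamma z = 0)
                          \<or> (z \<in> \<Gamma>3 \<and> q3 rho p H gamma z = 0)))"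
    proof (cases "z \<in> Omega H")
      case True
      have "det (p2 rho p H gamma z) = 0 \<longleftrightarrow> q1 rho H z = 0 \<or> q2 rho p H gamma z = 0 \<or> q3 rho p H gamma z = 0"
        using det[OF True] by simp
      then show ?thesis using True nz1[OF True] nz2[OF True] nz3[OF True] by blast
    qed simp
  qed
  have red1: "reduces_at (p2 rho p H gamma) (Omega H \<inter> \<Gamma>1) (q1 rho H) z" if "z \<in> Omega H \<inter> \<Gamma>1" for z
  proof (rule reduces_gen[where a = "q2 rho p H gamma" and b = "q3 rho p H gamma"])
    show oU: "open (Omega H \<inter> \<Gamma>1)" using oO A(7) by blast
    show "conic (Omega H \<inter> \<Gamma>1)" using conic_Int[OF Omega_conic A(10)] .
    show "z \<in> Omega H \<inter> \<Gamma>1" by fact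
    show "\<forall>w\<in>Omega H \<inter> \<Gamma>1. det (p2 rho p H gamma w) = q1 rho H w * q2 rho p H gamma w * q3 rho p H gamma w"
      using det by blast
    show "\<forall>w\<in>Omega H \<inter> \<Gamma>1. q2 rho p H gamma w * q3 rho p H gamma w \<noteq> 0"
    proof
      fix w assume w: "w \<in> Omega H \<inter> \<Gamma>1"
      then have "w \<notin> \<Gamma>2" "w \<notin> \<Gamma>3" using A(16,17,18) by blast+
      then show "q2 rho p H gamma w * q3 rho p H gamma w \<noteq> 0" using nz2 nz3 w by simp
    qed
    show "q1 rho H \<in> sm (Omega H \<inter> \<Gamma>1)" by (rule sm_q1)
    show "q2 rho p H gamma \<in> sm (Omega H \<inter> \<Gamma>1)" by (rule sm_q2) (use Dpos in blast)
    show "q3 rho p H gamma \<in> sm (Omega H \<inter> \<Gamma>1)" by (rule sm_q3) (use Dpos in blast)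
    show "\<And>i j. (\<lambda>w. p2 rho p H gamma w $ i $ j) \<in> sm (Omega H \<inter> \<Gamma>1)" by (rule sm_p2)
    show "\<And>w s. p2 rho p H gamma (dil s w) = s\<^sup>2 *\<^sub>R p2 rho p H gamma w" by (rule p2_dil)
    show "\<And>w s. q2 rho p H gamma (dil s w) = s\<^sup>2 * q2 rho p H gamma w" by (rule q2_dil)
    show "\<And>w s. q3 rho p H gamma (dil s w) = s\<^sup>2 * q3 rho p H gamma w" by (rule q3_dil)
    show "\<forall>w\<in>Omega H \<inter> \<Gamma>1. q1 rho H w = 0 \<longrightarrow> frechet_derivative (q1 rho H) (at w) e_tau \<noteq> 0"
      by (rule hq1[OF oU]) blast
  qed
  have red2: "reduces_at (p2 rho p H gamma) (Omega H \<inter> \<Gamma>2) (q2 rho p H gamma) z" if "z \<in> Omega H \<inter> \<Gamma>2" for z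
  proof (rule reduces_gen[where a = "q1 rho H" and b = "q3 rho p H gamma"])
    show oU: "open (Omega H \<inter> \<Gamma>2)" using oO A(8) by blast
    show "conic (Omega H \<inter> \<Gamma>2)" using conic_Int[OF Omega_conic A(11)] .
    show "z \<in> Omega H \<inter> \<Gamma>2" by fact
    show "\<forall>w\<in>Omega H \<inter> \<Gamma>2. det (p2 rho p H gamma w) = q2 rho p H gamma w * q1 rho H w * q3 rho p H gamma w"
      using det by (simp add: mult_ac)
    show "\<forall>w\<in>Omega H \<inter> \<Gamma>2. q1 rho H w * q3 rho p H gamma w \<noteq> 0"
    proof
      fix w assume w: "w \<in> Omega H \<inter> \<Gamma>2"
      then have "w \<notin> \<Gamma>1" "w \<notin> \<Gamma>3" using A(16,17,18) by blast+
      then show "q1 rho H w * q3 rho p H gamma w \<noteq> 0" using nz1 nz3 w by simp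
    qed
    show "q2 rho p H gamma \<in> sm (Omega H \<inter> \<Gamma>2)" by (rule sm_q2) (use Dpos in blast)
    show "q1 rho H \<in> sm (Omega H \<inter> \<Gamma>2)" by (rule sm_q1)
    show "q3 rho p H gamma \<in> sm (Omega H \<inter> \<Gamma>2)" by (rule sm_q3) (use Dpos in blast)
    show "\<And>i j. (\<lambda>w. p2 rho p H gamma w $ i $ j) \<in> sm (Omega H \<inter> \<Gamma>2)" by (rule sm_p2)
    show "\<And>w s. p2 rho p H gamma (dil s w) = s\<^sup>2 *\<^sub>R p2 rho p H gamma w" by (rule p2_dil)
    show "\<And>w s. q1 rho H (dil s w) = s\<^sup>2 * q1 rho H w" by (rule q1_dil)
    show "\<And>w s. q3 rho p H gamma (dil s w) = s\<^sup>2 * q3 rho p H gamma w" by (rule q3_dil)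
    show "\<forall>w\<in>Omega H \<inter> \<Gamma>2. q2 rho p H gamma w = 0 \<longrightarrow> frechet_derivative (q2 rho p H gamma) (at w) e_tau \<noteq> 0"
      by (rule hq2[OF oU]) blast
  qed
  have red3: "reduces_at (p2 rho p H gamma) (Omega H \<inter> \<Gamma>3) (q3 rho p H gamma) z" if "z \<in> Omega H \<inter> \<Gamma>3" for z
  proof (rule reduces_gen[where a = "q1 rho H" and b = "q2 rho p H gamma"])
    show oU: "open (Omega H \<inter> \<Gamma>3)" using oO A(9) by blast
    show "conic (Omega H \<inter> \<Gamma>3)" using conic_Int[OF Omega_conic A(12)] .
    show "z \<in> Omega H \<inter> \<Gamma>3" by fact
    show "\<forall>w\<in>Omega H \<inter> \<Gamma>3. det (p2 rho p H gamma w) = q3 rho p H gamma w * q1 rho H w * q2 rho p H gamma w"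
      using det by (simp add: mult_ac)
    show "\<forall>w\<in>Omega H \<inter> \<Gamma>3. q1 rho H w * q2 rho p H gamma w \<noteq> 0"
    proof
      fix w assume w: "w \<in> Omega H \<inter> \<Gamma>3"
      then have "w \<notin> \<Gamma>1" "w \<notin> \<Gamma>2" using A(16,17,18) by blast+
      then show "q1 rho H w * q2 rho p H gamma w \<noteq> 0" using nz1 nz2 w by simp
    qed
    show "q3 rho p H gamma \<in> sm (Omega H \<inter> \<Gamma>3)" by (rule sm_q3) (use Dpos in blast)
    show "q1 rho H \<in> sm (Omega H \<inter> \<Gamma>3)" by (rule sm_q1)
    show "q2 rho p H gamma \<in> sm (Omega H \<inter> \<Gamma>3)" by (rule sm_q2) (use Dpos in blast)
    show "\<And>i j. (\<lambda>w. p2 rho p H gamma w $ i $ j) \<in> sm (Omega H \<inter> \<Gamma>3)" by (rule sm_p2)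
    show "\<And>w s. p2 rho p H gamma (dil s w) = s\<^sup>2 *\<^sub>R p2 rho p H gamma w" by (rule p2_dil)
    show "\<And>w s. q1 rho H (dil s w) = s\<^sup>2 * q1 rho H w" by (rule q1_dil)
    show "\<And>w s. q2 rho p H gamma (dil s w) = s\<^sup>2 * q2 rho p H gamma w" by (rule q2_dil)
    show "\<forall>w\<in>Omega H \<inter> \<Gamma>3. q3 rho p H gamma w = 0 \<longrightarrow> frechet_derivative (q3 rho p H gamma) (at w) e_tau \<noteq> 0"
      by (rule hq3[OF oU]) blast
  qed
  have part2: "\<forall>z \<in> Omega H. det (p2 rho p H gamma z) = 0 \<longrightarrow>
            (z \<in> \<Gamma>1 \<and> q1 rho H z = 0 \<and> reduces_at (p2 rho p H gamma) (Omega H \<inter> \<Gamma>1) (q1 rho H) z)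
          \<or> (z \<in> \<Gamma>2 \<and> q2 rho p H gamma z = 0 \<and> reduces_at (p2 rho p H gamma) (Omega H \<inter> \<Gamma>2) (q2 rho p H gamma) z)
          \<or> (z \<in> \<Gamma>3 \<and> q3 rho p H gamma z = 0 \<and> reduces_at (p2 rho p H gamma) (Omega H \<inter> \<Gamma>3) (q3 rho p H gamma) z)"
  proof (intro ballI impI)
    fix z assume z: "z \<in> Omega H" "det (p2 rho p H gamma z) = 0"
    then have "q1 rho H z = 0 \<or> q2 rho p H gamma z = 0 \<or> q3 rho p H gamma z = 0" using det by simp
    then show "(z \<in> \<Gamma>1 \<and> q1 rho H z = 0 \<and> reduces_at (p2 rho p H gamma) (Omega H \<inter> \<Gamma>1) (q1 rho H) z)
          \<or> (z \<in> \<Gamma>2 \<and> q2 rho p H gamma z = 0 \<and> reduces_at (p2 rho p H gamma) (Omega H \<inter> \<Gamma>2) (q2 rho p H gamma) z)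
          \<or> (z \<in> \<Gamma>3 \<and> q3 rho p H gamma z = 0 \<and> reduces_at (p2 rho p H gamma) (Omega H \<inter> \<Gamma>3) (q3 rho p H gamma) z)"
      using z(1) nz1 nz2 nz3 red1 red2 red3 by blast
  qed
  show ?thesis using part1 part2 by blast
qed


end
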